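(* Any $D$-norm on $\mathbb{R}^{d+1}$ having a generator $\mathbf{Z}=(Z_0,\dots,Z_d)$ with $Z_i>0$ for all $0\le i\le d$ is also an $F$-norm on $\mathbb{R}^{d+1}$.
   Context: A $D$-norm on $\mathbb{R}^{d+1}$ is a norm of the form $\|\mathbf{x}\|_D=E(\max(|x_0|Z_0,\dots,|x_d|Z_d))$, where $\mathbf{Z}$ is componentwise nonnegative with $E(Z_i)=1$ for each $i$ (a generator). An $F$-norm on $\mathbb{R}^{d+1}$ is a norm of the form $E(\max(|x_0|,|x_1|X_1,\dots,|x_d|X_d))$ for a random vector $(X_1,\dots,X_d)$ whose components are a.s. nonnegative with $0<E(X_i)<\infty$. *)

theory Defs
  imports "HOL-Probability.Probability"
begin

text \<open>Vectors in R^(d+1) are functions nat => real, only indices 0..d matter.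
  A random vector on M is a function omega => (nat => real).\<close>

definition is_D_generator :: "'a measure \<Rightarrow> nat \<Rightarrow> ('a \<Rightarrow> nat \<Rightarrow> real) \<Rightarrow> bool" where
  "is_D_generator M d Z \<longleftrightarrow> prob_space M \<and>
     (\<forall>i\<le>d. (\<lambda>\<omega>. Z \<omega> i) \<in> borel_measurable M \<and> (AE \<omega> in M. Z \<omega> i \<ge> 0) \<and>
        integrable M (\<lambda>\<omega>. Z \<omega> i) \<and> integral\<^sup>L M (\<lambda>\<omega>. Z \<omega> i) = 1)"

definition D_norm :: "'a measure \<Rightarrow> nat \<Rightarrow> ('a \<Rightarrow> nat \<Rightarrow> real) \<Rightarrow> (nat \<Rightarrow> real) \<Rightarrow> real" where
  "D_norm M d Z x = integral\<^sup>L M (\<lambda>\<omega>. Max ((\<lambda>i. \<bar>x i\<bar> * Z \<omega> i) ` {..d}))"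

text \<open>Generator of an F-norm: components X_1..X_d (index 0 unused).\<close>
definition is_F_generator :: "'a measure \<Rightarrow> nat \<Rightarrow> ('a \<Rightarrow> nat \<Rightarrow> real) \<Rightarrow> bool" where
  "is_F_generator M d X \<longleftrightarrow> prob_space M \<and>
     (\<forall>i\<in>{1..d}. (\<lambda>\<omega>. X \<omega> i) \<in> borel_measurable M \<and> (AE \<omega> in M. X \<omega> i \<ge> 0) \<and>
        integrable M (\<lambda>\<omega>. X \<omega> i) \<and> integral\<^sup>L M (\<lambda>\<omega>. X \<omega> i) > 0)"

definition F_norm :: "'a measure \<Rightarrow> nat \<Rightarrow> ('a \<Rightarrow> nat \<Rightarrow> real) \<Rightarrow> (nat \<Rightarrow> real) \<Rightarrow> real" where
  "F_norm M d X x = integral\<^sup>L M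
     (\<lambda>\<omega>. Max ((\<lambda>i. if i = 0 then \<bar>x 0\<bar> else \<bar>x i\<bar> * X \<omega> i) ` {..d}))"

end

theory Submission
  imports Defs
begin

theorem corollary2p20:
  fixes M :: "'a measure" and d :: nat and Z :: "'a \<Rightarrow> nat \<Rightarrow> real"
  assumes "is_D_generator M d Z"
    and "\<forall>i\<le>d. AE \<omega> in M. Z \<omega> i > 0"
  shows "\<exists>(N :: 'a measure) X. is_F_generator N d X \<and> (\<forall>x. D_norm M d Z x = F_norm N d X x)"
proof -
  have P: "prob_space M" using assms(1) by (simp add: is_D_generator_def)
  have meas: "\<And>i. i \<le> d \<Longrightarrow> (\<lambda>\<omega>. Z \<omega> i) \<in> borel_measurable M"
   and nn: "\<And>i. i \<le> d \<Longrightarrow> AE \<omega> in M. Z \<omega> i \<ge> 0"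
   and int: "\<And>i. i \<le> d \<Longrightarrow> integrable M (\<lambda>\<omega>. Z \<omega> i)"
   and one: "\<And>i. i \<le> d \<Longrightarrow> integral\<^sup>L M (\<lambda>\<omega>. Z \<omega> i) = 1"
    using assms(1) by (auto simp: is_D_generator_def)
  have pos: "\<And>i. i \<le> d \<Longrightarrow> AE \<omega> in M. Z \<omega> i > 0" using assms(2) by auto
  define g where "g = (\<lambda>\<omega>. Z \<omega> 0)"
  define N where "N = density M (\<lambda>\<omega>. ennreal (g \<omega>))"
  define X where "X = (\<lambda>\<omega> i. Z \<omega> i / g \<omega>)"
  have gm[measurable]: "g \<in> borel_measurable M" using meas[of 0] by (simp add: g_def)
  have gnn: "AE \<omega> in M. 0 \<le> g \<omega>" using nn[of 0] by (simp add: g_def)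
  have gpos: "AE \<omega> in M. 0 < g \<omega>" using pos[of 0] by (simp add: g_def)
  have sN: "sets N = sets M" "space N = space M" by (simp_all add: N_def)
  have "emeasure N (space N) = (\<integral>\<^sup>+ x. ennreal (g x) * indicator (space M) x \<partial>M)"
    unfolding N_def by (simp add: emeasure_density)
  also have "\<dots> = (\<integral>\<^sup>+ x. ennreal (g x) \<partial>M)"
    by (rule nn_integral_cong) simp
  also have "\<dots> = ennreal (integral\<^sup>L M g)"
    using int[of 0] gnn by (simp add: g_def nn_integral_eq_integral)
  also have "\<dots> = 1" using one[of 0] by (simp add: g_def)
  finally have PN: "prob_space N" by (rule prob_spaceI)
  have Xm: "\<And>i. i \<le> d \<Longrightarrow> (\<lambda>\<omega>. X \<omega> i) \<in> borel_measurable M"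
    unfolding X_def using meas gm by measurable
  have FG: "is_F_generator N d X"
    unfolding is_F_generator_def
  proof (intro conjI PN ballI)
    fix i assume i: "i \<in> {1..d}"
    hence id: "i \<le> d" by simp
    show "(\<lambda>\<omega>. X \<omega> i) \<in> borel_measurable N"
      using Xm[OF id] measurable_cong_sets[OF sN(1) refl] by blast
    show "AE \<omega> in N. 0 \<le> X \<omega> i"
      unfolding N_def
      by (subst AE_density) (use nn[OF id] gnn in \<open>auto simp: X_def\<close>)
    have ae: "AE \<omega> in M. g \<omega> *\<^sub>R X \<omega> i = Z \<omega> i"
      using gpos by eventually_elim (auto simp: X_def)
    have "integrable M (\<lambda>\<omega>. g \<omega> *\<^sub>R X \<omega> i)"
    proof (subst integrable_cong_AE[OF _ _ ae])
      show "(\<lambda>\<omega>. g \<omega> *\<^sub>R X \<omega> i) \<in> borel_measurable M" using Xm[OF id] gm by measurable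
    qed (use int[OF id] meas[OF id] in auto)
    then show "integrable N (\<lambda>\<omega>. X \<omega> i)"
      unfolding N_def using integrable_density[OF Xm[OF id] gm gnn] by simp
    have "integral\<^sup>L N (\<lambda>\<omega>. X \<omega> i) = integral\<^sup>L M (\<lambda>\<omega>. g \<omega> *\<^sub>R X \<omega> i)"
      unfolding N_def by (rule integral_density[OF Xm[OF id] gm gnn])
    also have "\<dots> = integral\<^sup>L M (\<lambda>\<omega>. Z \<omega> i)"
      by (rule integral_cong_AE) (use ae Xm[OF id] meas[OF id] in auto)
    finally show "integral\<^sup>L N (\<lambda>\<omega>. X \<omega> i) > 0" using one[OF id] by simp
  qed
  have EQ: "D_norm M d Z x = F_norm N d X x" for x
  proof -
    define F where "F = (\<lambda>\<omega>. Max ((\<lambda>i. if i = 0 then \<bar>x 0\<bar> else \<bar>x i\<bar> * X \<omega> i) ` {..d}))"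
    have Fm: "F \<in> borel_measurable M"
      unfolding F_def
      by (rule borel_measurable_Max) (use Xm in auto)
    have Dm: "(\<lambda>\<omega>. Max ((\<lambda>i. \<bar>x i\<bar> * Z \<omega> i) ` {..d})) \<in> borel_measurable M"
      by (rule borel_measurable_Max) (use meas in auto)
    have "F_norm N d X x = integral\<^sup>L N F" by (simp add: F_norm_def F_def)
    also have "\<dots> = integral\<^sup>L M (\<lambda>\<omega>. g \<omega> *\<^sub>R F \<omega>)"
      unfolding N_def by (rule integral_density[OF Fm gm gnn])
    also have "\<dots> = integral\<^sup>L M (\<lambda>\<omega>. Max ((\<lambda>i. \<bar>x i\<bar> * Z \<omega> i) ` {..d}))"
    proof (rule integral_cong_AE)
      show "(\<lambda>\<omega>. g \<omega> *\<^sub>R F \<omega>) \<in> borel_measurable M" using Fm gm by measurable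
      show "(\<lambda>\<omega>. Max ((\<lambda>i. \<bar>x i\<bar> * Z \<omega> i) ` {..d})) \<in> borel_measurable M" by (rule Dm)
      show "AE \<omega> in M. g \<omega> *\<^sub>R F \<omega> = Max ((\<lambda>i. \<bar>x i\<bar> * Z \<omega> i) ` {..d})"
        using gpos
      proof eventually_elim
        case (elim \<omega>)
        have mono: "mono (\<lambda>y. g \<omega> * y)" using elim by (auto intro: monoI mult_left_mono)
        have "g \<omega> *\<^sub>R F \<omega> = Max ((\<lambda>y. g \<omega> * y) ` (\<lambda>i. if i = 0 then \<bar>x 0\<bar> else \<bar>x i\<bar> * X \<omega> i) ` {..d})"
          unfolding F_def by (simp add: mono_Max_commute[OF mono])
        also have "(\<lambda>y. g \<omega> * y) ` (\<lambda>i. if i = 0 then \<bar>x 0\<bar> else \<bar>x i\<bar> * X \<omega> i) ` {..d}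
            = (\<lambda>i. \<bar>x i\<bar> * Z \<omega> i) ` {..d}"
          unfolding image_image
          by (rule image_cong) (use elim in \<open>auto simp: X_def g_def\<close>)
        finally show ?case .
      qed
    qed
    finally show ?thesis by (simp add: D_norm_def)
  qed
  show ?thesis using FG EQ by blast
qed

end
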